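(* Let $\mathcal H$ be a finite-dimensional Hilbert space, $\mathcal D$ the set of density operators on $\mathcal H$, and consider the two-time-scale Lindblad equation $\frac{d\rho}{dt} = (\mathcal L_0 + \epsilon \mathcal L_1)\rho$, where $\mathcal L_0$ is a Lindblad super-operator and $\epsilon>0$ is small. Assume that for $\epsilon=0$ the dynamics converge to a stationary regime, i.e. the limit $U_0\rho := \lim_{t\to\infty} e^{t\mathcal L_0}\rho$ exists for all $\rho\in\mathcal D$, and write it in Kraus form $U_0\rho = \sum_\mu M_\mu \rho M_\mu^\dagger$ with $\sum_\mu M_\mu^\dagger M_\mu = \mathbb I_{\mathcal H}$. Assume that the set of steady states $\mathcal D_0 = \{\rho\in\mathcal D : \mathcal L_0\rho = 0\}$ coincides with the set of density operators supported on a subspace $\mathcal H_0\subseteq\mathcal H$. Let $\{|n\rangle\}_{n=1}^{\dim\mathcal H_0}$ be an orthonormal basis of $\mathcal H_0$, $P_n = |n\rangle\langle n|$, $P_0=\sum_n P_n$, and assume $$\mathcal L_1\rho = \sum_{n=1}^{\dim \mathcal H_0}\Big(P_n\rho P_n^\dagger - \tfrac12 P_n^\dagger P_n\rho - \tfrac12 \rho P_n^\dagger P_n\Big).$$ Then the first-order (in $\epsilon$) effective dynamics of $\rho_e\in\mathcal D_0$ obtained by adiabatic elimination — i.e. $\frac{d\rho_e}{dt} = (\mathcal L_{e,0}+\epsilon\mathcal L_{e,1})\rho_e + O(\epsilon^2)$, where $\mathcal L_{e,0}=0$ and $\mathcal L_{e,1}\rho_e = K_0\big(U_0\mathcal L_1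 K_0(\rho_e)\big)$ with $K_0(\rho)=P_0\rho P_0$ — is the Lindblad equation $$\frac{d\rho_e}{dt} = \epsilon\sum_{n,m=1}^{\dim\mathcal H_0}\kappa_{nm}\Big(R_{nm}\rho_e R_{nm}^\dagger - \tfrac12 R_{nm}^\dagger R_{nm}\rho_e - \tfrac12\rho_e R_{nm}^\dagger R_{nm}\Big),$$ where $R_{nm} = |n\rangle\langle m|$ and $\kappa_{nm} = \sum_\mu |\langle n|M_\mu|m\rangle|^2$.
   Context: A Lindblad super-operator has the form $\mathcal L\rho = -i[H,\rho]+\sum_k D_{R_k}[\rho]$ with $H$ Hermitian and dissipator $D_R[\rho] = R\rho R^\dagger - \tfrac12(R^\dagger R\rho+\rho R^\dagger R)$. The adiabatic elimination framework: one seeks a map $\rho = K(\rho_e)=\sum_{m\ge0}\epsilon^m K_m(\rho_e)$ and an effective generator $\mathcal L_e = \mathcal L_{e,0}+\epsilon\mathcal L_{e,1}+O(\epsilon^2)$ with $(\mathcal L_0+\epsilon\mathcal L_1)K(\rho_e) = K(\mathcal L_e\rho_e)$, where $K_0$ is the projection onto $\mathcal D_0$ given by $K_0(\rho)=P_0\rho P_0$. *)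

theory Defs
  imports "HOL-Analysis.Analysis"
begin

text \<open>Operators on a finite-dimensional Hilbert space H = complex^'n are
  matrices of type complex^'n^'n.\<close>

type_synonym 'n cop = "complex^'n^'n"

definition adj :: "'n::finite cop \<Rightarrow> 'n cop" where
  "adj A = (\<chi> i j. cnj (A $ j $ i))"

definition cscale :: "complex \<Rightarrow> 'n::finite cop \<Rightarrow> 'n cop" where
  "cscale c A = (\<chi> i j. c * A $ i $ j)"

text \<open>Inner product, antilinear in the first argument: cinner v w = <v|w>.\<close>
definition cinner :: "complex^'n::finite \<Rightarrow> complex^'n \<Rightarrow> complex" where
  "cinner v w = (\<Sum>i\<in>UNIV. cnj (v $ i) * w $ i)"

definition outer :: "complex^'n::finite \<Rightarrow> complex^'n \<Rightarrow> 'n cop" where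
  "outer v w = (\<chi> i j. v $ i * cnj (w $ j))"

definition hermitian :: "'n::finite cop \<Rightarrow> bool" where
  "hermitian A \<longleftrightarrow> adj A = A"

definition psd :: "'n::finite cop \<Rightarrow> bool" where
  "psd A \<longleftrightarrow> (\<forall>v. Im (cinner v (A *v v)) = 0 \<and> Re (cinner v (A *v v)) \<ge> 0)"

definition density_ops :: "'n::finite cop set" where
  "density_ops = {\<rho>. hermitian \<rho> \<and> psd \<rho> \<and> trace \<rho> = 1}"

definition dissip :: "'n::finite cop \<Rightarrow> 'n cop \<Rightarrow> 'n cop" where
  "dissip R \<rho> = R ** \<rho> ** adj R
      - cscale (1/2) (adj R ** R ** \<rho> + \<rho> ** adj R ** R)"

definition lindblad :: "'n::finite cop \<Rightarrow> 'n cop list \<Rightarrow> 'n cop \<Rightarrow> 'n cop" where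
  "lindblad H Rs \<rho> = cscale (-\<i>) (H ** \<rho> - \<rho> ** H) + (\<Sum>R\<leftarrow>Rs. dissip R \<rho>)"

definition is_lindblad :: "('n::finite cop \<Rightarrow> 'n cop) \<Rightarrow> bool" where
  "is_lindblad L \<longleftrightarrow> (\<exists>H Rs. hermitian H \<and> (\<forall>\<rho>. L \<rho> = lindblad H Rs \<rho>))"

definition evol :: "('n::finite cop \<Rightarrow> 'n cop) \<Rightarrow> real \<Rightarrow> 'n cop \<Rightarrow> 'n cop" where
  "evol L t \<rho> = (\<Sum>k. (t ^ k / fact k) *\<^sub>R (L ^^ k) \<rho>)"

definition kraus :: "'i set \<Rightarrow> ('i \<Rightarrow> 'n::finite cop) \<Rightarrow> 'n cop \<Rightarrow> 'n cop" where
  "kraus I M \<rho> = (\<Sum>\<mu>\<in>I. M \<mu> ** \<rho> ** adj (M \<mu>))"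

definition cspan_basis :: "(nat \<Rightarrow> complex^'n::finite) \<Rightarrow> nat \<Rightarrow> (complex^'n) set" where
  "cspan_basis e d = {v. \<exists>c. v = (\<Sum>k<d. (\<chi> i. c k * e k $ i))}"

text \<open>An operator supported on a subspace S: its range lies in S (and, being
  Hermitian for density operators, it then vanishes on the orthogonal complement).\<close>
definition supported_on :: "'n::finite cop \<Rightarrow> (complex^'n) set \<Rightarrow> bool" where
  "supported_on \<rho> S \<longleftrightarrow> (\<forall>v. \<rho> *v v \<in> S)"

end

theory Submission
  imports Defs
begin

lemma cscale_add: "cscale c (A + B) = cscale c A + cscale c B"
  by (simp add: cscale_def vec_eq_iff algebra_simps)
lemma cscale_diff: "cscale c (A - B) = cscale c A - cscale c B"
  by (simp add: cscale_def vec_eq_iff algebra_simps)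
lemma cscale_zero[simp]: "cscale c 0 = 0"
  by (simp add: cscale_def vec_eq_iff)
lemma cscale_one[simp]: "cscale 1 A = A"
  by (simp add: cscale_def vec_eq_iff)
lemma cscale_cscale: "cscale a (cscale b A) = cscale (a*b) A"
  by (simp add: cscale_def vec_eq_iff)
lemma cscale_sum: "cscale c (\<Sum>i\<in>S. f i) = (\<Sum>i\<in>S. cscale c (f i))"
  by (induction S rule: infinite_finite_induct) (auto simp: cscale_add)
lemma cscale_multL: "cscale c A ** B = cscale c (A ** B)"
  by (simp add: cscale_def vec_eq_iff matrix_matrix_mult_def sum_distrib_left mult.assoc)
lemma cscale_multR: "A ** cscale c B = cscale c (A ** B)"
  by (simp add: cscale_def vec_eq_iff matrix_matrix_mult_def sum_distrib_left mult.assoc mult.left_commute)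
lemma matrix_sub_ldistrib: "A ** (B - C) = A ** B - A ** (C::'a::ring_1^'n^'n)"
  by (simp add: vec_eq_iff matrix_matrix_mult_def sum_subtractf algebra_simps)
lemma matrix_sub_rdistrib: "(B - C) ** A = B ** A - C ** (A::'a::ring_1^'n^'n)"
  by (simp add: vec_eq_iff matrix_matrix_mult_def sum_subtractf algebra_simps)
lemma matrix_add_rdistrib': "(B + C) ** A = B ** A + C ** (A::'a::ring_1^'n^'n)" for B C :: "'a::ring_1^'n^'n"
  by (simp add: vec_eq_iff matrix_matrix_mult_def sum.distrib algebra_simps)
lemma matrix_sum_ldistrib: "A ** (\<Sum>i\<in>S. f i) = (\<Sum>i\<in>S. A ** f i :: 'a::ring_1^'n^'n)"
  by (induction S rule: infinite_finite_induct) (auto simp: matrix_add_ldistrib)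
lemma matrix_sum_rdistrib: "(\<Sum>i\<in>S. f i) ** A = (\<Sum>i\<in>S. f i ** A :: 'a::ring_1^'n^'n)" for f :: "_ \<Rightarrow> 'a::ring_1^'n^'n"
  by (induction S rule: infinite_finite_induct) (auto simp: matrix_add_rdistrib')

lemma adj_outer: "adj (outer a b) = outer b a"
  by (simp add: adj_def outer_def vec_eq_iff)
lemma outer_mult: "outer a b ** outer c d = cscale (cinner b c) (outer a d)"
  by (simp add: outer_def cscale_def cinner_def vec_eq_iff matrix_matrix_mult_def sum_distrib_left sum_distrib_right algebra_simps)
lemma outer_mult3: "outer a b ** A ** outer c d = cscale (cinner b (A *v c)) (outer a d)"
  apply (simp add: outer_def cscale_def cinner_def vec_eq_iff matrix_matrix_mult_def matrix_vector_mult_def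
     sum_distrib_left sum_distrib_right algebra_simps)
  using sum.swap by fastforce
lemma outer_mulv: "outer a b *v v = (\<chi> i. cinner b v * a $ i)"
  by (simp add: outer_def cinner_def vec_eq_iff matrix_vector_mult_def sum_distrib_left sum_distrib_right algebra_simps)
lemma cinner_swap: "cinner v a = cnj (cinner a v)"
  by (simp add: cinner_def mult.commute)

lemma cscale_0[simp]: "cscale 0 A = 0"
  by (simp add: cscale_def vec_eq_iff)
lemma cscale_half: "cscale (1/2) A + cscale (1/2) A = A"
  by (simp add: cscale_def vec_eq_iff)
lemma mv_sum: "(\<Sum>i\<in>S. f i) *v w = (\<Sum>i\<in>S. f i *v w :: complex^'n)" for f :: "_ \<Rightarrow> complex^'n^'n"
  by (induction S rule: infinite_finite_induct) (auto simp: matrix_vector_mult_add_rdistrib)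
lemma cinner_sum2: "cinner v (\<Sum>k\<in>S. f k) = (\<Sum>k\<in>S. cinner v (f k))"
  unfolding cinner_def by (simp add: sum_distrib_left sum.swap[of _ S])
lemma cinner_scal2: "cinner v (\<chi> i. c * w $ i) = c * cinner v w"
  unfolding cinner_def by (simp add: sum_distrib_left algebra_simps)
lemma adj_mult: "adj (A ** B) = adj B ** adj A"
  by (simp add: adj_def vec_eq_iff matrix_matrix_mult_def mult.commute)
lemma adj_add: "adj (A + B) = adj A + adj B"
  by (simp add: adj_def vec_eq_iff)
lemma adj_sum: "adj (\<Sum>i\<in>S. f i) = (\<Sum>i\<in>S. adj (f i))"
  by (induction S rule: infinite_finite_induct) (auto simp: adj_add adj_def vec_eq_iff)
lemma mult_outer: "M ** outer a b = outer (M *v a) b"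
  by (simp add: outer_def vec_eq_iff matrix_matrix_mult_def matrix_vector_mult_def sum_distrib_right mult.assoc)
lemma outer_mult_adj: "outer a b ** adj N = outer a (N *v b)"
  by (simp add: outer_def adj_def vec_eq_iff matrix_matrix_mult_def matrix_vector_mult_def sum_distrib_left mult_ac)

lemma kraus_add: "kraus I M (A + B) = kraus I M A + kraus I M B"
  by (simp add: kraus_def matrix_add_ldistrib matrix_add_rdistrib' sum.distrib)
lemma kraus_diff: "kraus I M (A - B) = kraus I M A - kraus I M B"
  by (simp add: kraus_def matrix_sub_ldistrib matrix_sub_rdistrib sum_subtractf)
lemma kraus_cscale: "kraus I M (cscale c A) = cscale c (kraus I M A)"
  by (simp add: kraus_def cscale_multL cscale_multR cscale_sum)
lemma kraus_sum: "kraus I M (\<Sum>i\<in>S. f i) = (\<Sum>i\<in>S. kraus I M (f i))"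
  by (induction S rule: infinite_finite_induct) (simp add: kraus_def, simp add: kraus_def, simp add: kraus_add)

lemma lindblad_zero: assumes "is_lindblad L" shows "L 0 = 0"
proof -
  obtain H Rs where "\<forall>\<rho>. L \<rho> = lindblad H Rs \<rho>" using assms unfolding is_lindblad_def by blast
  then show ?thesis by (simp add: lindblad_def dissip_def)
qed

lemma evol_fix: assumes "L 0 = 0" "L \<rho> = 0" shows "evol L t \<rho> = \<rho>"
proof -
  have p: "(L ^^ k) \<rho> = (if k = 0 then \<rho> else 0)" for k
    by (induction k) (auto simp: assms)
  have "(\<lambda>k. (t ^ k / fact k) *\<^sub>R (L ^^ k) \<rho>) = (\<lambda>k. if k = 0 then \<rho> else 0)"
    by (auto simp: p)
  moreover have "(\<lambda>k. if k = 0 then \<rho> else (0::'a cop)) sums \<rho>"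
    using sums_single[of 0 "\<lambda>_. \<rho>"] by simp
  ultimately show ?thesis unfolding evol_def by (simp add: sums_iff)
qed

lemma P0_span:
  fixes e :: "nat \<Rightarrow> complex^'n::finite"
  assumes onb: "\<forall>a<d. \<forall>b<d. cinner (e a) (e b) = (if a = b then 1 else 0)"
    and w: "w \<in> cspan_basis e d"
  shows "(\<Sum>n<d. outer (e n) (e n)) *v w = w"
proof -
  obtain c where wc: "w = (\<Sum>k<d. (\<chi> i. c k * e k $ i))" using w unfolding cspan_basis_def by blast
  have ci: "cinner (e n) w = c n" if "n < d" for n
  proof -
    have "cinner (e n) w = (\<Sum>k<d. c k * cinner (e n) (e k))"
      by (simp add: wc cinner_sum2 cinner_scal2)
    also have "\<dots> = (\<Sum>k<d. if k = n then c k else 0)"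
      by (rule sum.cong) (use onb that in auto)
    also have "\<dots> = c n" using that by simp
    finally show ?thesis .
  qed
  have "(\<Sum>n<d. outer (e n) (e n)) *v w = (\<Sum>n<d. (\<chi> i. cinner (e n) w * e n $ i))"
    by (simp add: mv_sum outer_mulv)
  also have "\<dots> = (\<Sum>n<d. (\<chi> i. c n * e n $ i))"
    by (rule sum.cong) (auto simp: ci)
  finally show ?thesis using wc by simp
qed

lemma P_density:
  fixes e :: "nat \<Rightarrow> complex^'n::finite"
  assumes onb: "\<forall>a<d. \<forall>b<d. cinner (e a) (e b) = (if a = b then 1 else 0)"
    and n: "n < d"
  shows "outer (e n) (e n) \<in> density_ops \<and> supported_on (outer (e n) (e n)) (cspan_basis e d)"
proof -
  have herm: "hermitian (outer (e n) (e n))" by (simp add: hermitian_def adj_outer)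
  have "cinner v (outer (e n) (e n) *v v) = complex_of_real ((cmod (cinner (e n) v))\<^sup>2)" for v
  proof -
    have "cinner v (outer (e n) (e n) *v v) = cinner (e n) v * cinner v (e n)"
      by (simp add: outer_mulv cinner_scal2)
    also have "\<dots> = cinner (e n) v * cnj (cinner (e n) v)" by (simp only: cinner_swap[of v "e n"])
    finally show ?thesis by (simp only: complex_norm_square)
  qed
  then have psd: "psd (outer (e n) (e n))" by (simp add: psd_def)
  have "trace (outer (e n) (e n)) = cinner (e n) (e n)"
    by (simp add: trace_def outer_def cinner_def mult.commute)
  then have tr: "trace (outer (e n) (e n)) = 1" using onb n by simp
  have "outer (e n) (e n) *v v \<in> cspan_basis e d" for v
  proof -
    let ?c = "\<lambda>k. if k = n then cinner (e n) v else 0"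
    have eqc: "(\<Sum>k<d. (\<chi> i. ?c k * e k $ i)) = (\<chi> i. cinner (e n) v * e n $ i)"
      using n by (simp add: vec_eq_iff if_distrib if_distribR cong: if_cong)
    show ?thesis unfolding cspan_basis_def outer_mulv mem_Collect_eq
      by (intro exI[of _ ?c]) (simp only: eqc)
  qed
  then show ?thesis using herm psd tr by (simp add: density_ops_def supported_on_def)
qed

lemma P0_P:
  fixes e :: "nat \<Rightarrow> complex^'n::finite"
  assumes onb: "\<forall>a<d. \<forall>b<d. cinner (e a) (e b) = (if a = b then 1 else 0)"
    and n: "n < d"
  shows "(\<Sum>k<d. outer (e k) (e k)) ** outer (e n) (e n) = outer (e n) (e n)"
    and "outer (e n) (e n) ** (\<Sum>k<d. outer (e k) (e k)) = outer (e n) (e n)"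
proof -
  have "(\<Sum>k<d. outer (e k) (e k)) ** outer (e n) (e n) = (\<Sum>k<d. if k = n then outer (e n) (e n) else 0)"
    unfolding matrix_sum_rdistrib outer_mult by (rule sum.cong) (use onb n in auto)
  also have "\<dots> = outer (e n) (e n)" using n by (subst sum.delta) auto
  finally show "(\<Sum>k<d. outer (e k) (e k)) ** outer (e n) (e n) = outer (e n) (e n)" .
  have "outer (e n) (e n) ** (\<Sum>k<d. outer (e k) (e k)) = (\<Sum>k<d. if k = n then outer (e n) (e n) else 0)"
    unfolding matrix_sum_ldistrib outer_mult by (rule sum.cong) (use onb n in auto)
  also have "\<dots> = outer (e n) (e n)" using n by (subst sum.delta) auto
  finally show "outer (e n) (e n) ** (\<Sum>k<d. outer (e k) (e k)) = outer (e n) (e n)" .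
qed

lemma cinner_outer_self: "cinner v (outer w w *v v) = cinner v w * cnj (cinner v w)"
proof -
  have "cinner v (outer w w *v v) = cinner w v * cinner v w" by (simp add: outer_mulv cinner_scal2)
  then show ?thesis by (simp add: cinner_swap[of w v] mult.commute)
qed

lemma steady_fix:
  assumes L0: "is_lindblad L0"
    and limit: "\<forall>\<rho>\<in>density_ops. ((\<lambda>t. evol L0 t \<rho>) \<longlongrightarrow> kraus I M \<rho>) at_top"
    and s: "\<sigma> \<in> density_ops" "L0 \<sigma> = 0"
  shows "kraus I M \<sigma> = \<sigma>"
proof -
  have "((\<lambda>t::real. evol L0 t \<sigma>) \<longlongrightarrow> kraus I M \<sigma>) at_top" using limit s by blast
  moreover have "((\<lambda>t::real. evol L0 t \<sigma>) \<longlongrightarrow> \<sigma>) at_top"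
    using evol_fix[OF lindblad_zero[OF L0] s(2)] by simp
  ultimately show ?thesis by (metis tendsto_unique trivial_limit_at_top_linorder)
qed

theorem proposition1:
  fixes L0 :: "'n::finite cop \<Rightarrow> 'n cop"
    and I :: "'i set" and M :: "'i \<Rightarrow> 'n cop"
    and e :: "nat \<Rightarrow> complex^'n" and d :: nat
  assumes L0_lindblad: "is_lindblad L0"
    and I_fin: "finite I"
    and kraus_id: "(\<Sum>\<mu>\<in>I. adj (M \<mu>) ** M \<mu>) = mat 1"
    and limit: "\<forall>\<rho>\<in>density_ops. ((\<lambda>t. evol L0 t \<rho>) \<longlongrightarrow> kraus I M \<rho>) at_top"
    and onb: "\<forall>a<d. \<forall>b<d. cinner (e a) (e b) = (if a = b then 1 else 0)"
    and steady: "{\<rho>\<in>density_ops. L0 \<rho> = 0}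
                 = {\<rho>\<in>density_ops. supported_on \<rho> (cspan_basis e d)}"
  shows "\<forall>\<rho>e\<in>{\<rho>\<in>density_ops. L0 \<rho> = 0}.
     (let P = (\<lambda>n. outer (e n) (e n));
          P0 = (\<Sum>n<d. P n);
          K0 = (\<lambda>\<rho>. P0 ** \<rho> ** P0);
          L1 = (\<lambda>\<rho>. \<Sum>n<d. P n ** \<rho> ** adj (P n)
                   - cscale (1/2) (adj (P n) ** P n ** \<rho>)
                   - cscale (1/2) (\<rho> ** adj (P n) ** P n));
          R = (\<lambda>n m. outer (e n) (e m));
          \<kappa> = (\<lambda>n m. \<Sum>\<mu>\<in>I. (cmod (cinner (e n) (M \<mu> *v e m)))\<^sup>2)
      in K0 (kraus I M (L1 (K0 \<rho>e)))
         = (\<Sum>n<d. \<Sum>m<d. cscale (complex_of_real (\<kappa> n m))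
              (R n m ** \<rho>e ** adj (R n m)
               - cscale (1/2) (adj (R n m) ** R n m ** \<rho>e)
               - cscale (1/2) (\<rho>e ** adj (R n m) ** R n m))))"
proof (intro ballI)
  fix \<rho> assume \<rho>: "\<rho> \<in> {\<rho>\<in>density_ops. L0 \<rho> = 0}"
  let ?Pj = "\<lambda>n. outer (e n) (e n)"
  let ?Q0 = "\<Sum>n<d. ?Pj n"
  let ?R = "\<lambda>n m. outer (e n) (e m)"
  let ?r = "\<lambda>n. cinner (e n) (\<rho> *v e n)"
  let ?T = "\<lambda>n. cscale (?r n) (?Pj n) - cscale (1/2) (?Pj n ** \<rho>) - cscale (1/2) (\<rho> ** ?Pj n)"
  let ?D = "\<Sum>n<d. cscale (?r n) (?Pj n)"
  let ?\<kappa> = "\<lambda>n m. \<Sum>\<mu>\<in>I. (cmod (cinner (e n) (M \<mu> *v e m)))\<^sup>2"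
  have dens: "\<rho> \<in> density_ops" and L0\<rho>: "L0 \<rho> = 0" using \<rho> by auto
  have supp: "supported_on \<rho> (cspan_basis e d)" using \<rho> steady by blast
  have P\<rho>: "?Q0 ** \<rho> = \<rho>"
    unfolding matrix_eq
  proof
    fix x
    have "(?Q0 ** \<rho>) *v x = ?Q0 *v (\<rho> *v x)" by (simp add: matrix_vector_mul_assoc)
    also have "\<dots> = \<rho> *v x" using P0_span[OF onb] supp unfolding supported_on_def by blast
    finally show "(?Q0 ** \<rho>) *v x = \<rho> *v x" .
  qed
  have herm: "adj \<rho> = \<rho>" using dens by (simp add: density_ops_def hermitian_def)
  have adjP0: "adj ?Q0 = ?Q0" by (simp add: adj_sum adj_outer)
  have \<rho>P: "\<rho> ** ?Q0 = \<rho>"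
  proof -
    have "\<rho> ** ?Q0 = adj \<rho> ** adj ?Q0" by (simp only: herm adjP0)
    also have "\<dots> = adj (?Q0 ** \<rho>)" by (simp only: adj_mult)
    also have "\<dots> = \<rho>" by (simp only: P\<rho> herm)
    finally show ?thesis .
  qed
  have K\<rho>: "kraus I M \<rho> = \<rho>" by (rule steady_fix[OF L0_lindblad limit dens L0\<rho>])
  have KP: "kraus I M (?Pj n) = ?Pj n" if "n < d" for n
  proof -
    have "?Pj n \<in> {\<rho>\<in>density_ops. L0 \<rho> = 0}"
      using P_density[OF onb that] steady by blast
    then show ?thesis using steady_fix[OF L0_lindblad limit] by blast
  qed
  have K0\<rho>: "?Q0 ** \<rho> ** ?Q0 = \<rho>" using P\<rho> \<rho>P by simp
  have adjPP: "adj (?Pj n) ** ?Pj n = ?Pj n" if "n < d" for n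
    using onb that by (simp add: adj_outer outer_mult)
  have L1eq: "(\<Sum>n<d. ?Pj n ** \<rho> ** adj (?Pj n)
                   - cscale (1/2) (adj (?Pj n) ** ?Pj n ** \<rho>)
                   - cscale (1/2) (\<rho> ** adj (?Pj n) ** ?Pj n)) = (\<Sum>n<d. ?T n)"
  proof (rule sum.cong)
    fix n assume "n \<in> {..<d}"
    then have n: "n < d" by simp
    have a: "?Pj n ** \<rho> ** adj (?Pj n) = cscale (?r n) (?Pj n)"
      by (simp add: adj_outer outer_mult3)
    have b: "adj (?Pj n) ** ?Pj n ** \<rho> = ?Pj n ** \<rho>" using adjPP[OF n] by simp
    have c: "\<rho> ** adj (?Pj n) ** ?Pj n = \<rho> ** ?Pj n"
      by (simp only: matrix_mul_assoc[symmetric] adjPP[OF n])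
    show "?Pj n ** \<rho> ** adj (?Pj n)
                   - cscale (1/2) (adj (?Pj n) ** ?Pj n ** \<rho>)
                   - cscale (1/2) (\<rho> ** adj (?Pj n) ** ?Pj n) = ?T n"
      using a b c by simp
  qed simp
  have sumT: "(\<Sum>n<d. ?T n) = ?D - \<rho>"
  proof -
    have "(\<Sum>n<d. ?T n) = ?D - cscale (1/2) (?Q0 ** \<rho>) - cscale (1/2) (\<rho> ** ?Q0)"
      by (simp add: sum_subtractf cscale_sum matrix_sum_rdistrib matrix_sum_ldistrib)
    also have "\<dots> = ?D - (cscale (1/2) \<rho> + cscale (1/2) \<rho>)" using P\<rho> \<rho>P by simp
    also have "\<dots> = ?D - \<rho>" by (simp add: cscale_half)
    finally show ?thesis .
  qed
  have Kr: "kraus I M (?D - \<rho>) = ?D - \<rho>"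
    by (simp add: kraus_diff kraus_sum kraus_cscale K\<rho> KP)
  have P0D1: "?Q0 ** ?D = ?D"
    unfolding matrix_sum_ldistrib cscale_multR
    by (rule sum.cong) (simp_all add: P0_P[OF onb])
  have P0D2: "?D ** ?Q0 = ?D"
    unfolding matrix_sum_rdistrib cscale_multL
    by (rule sum.cong) (simp_all add: P0_P[OF onb])
  have P0D: "?Q0 ** ?D ** ?Q0 = ?D" using P0D1 P0D2 by simp
  have LHS: "?Q0 ** kraus I M (?D - \<rho>) ** ?Q0 = ?D - \<rho>"
    unfolding Kr by (simp add: matrix_sub_ldistrib matrix_sub_rdistrib P0D K0\<rho>)
  have kap: "complex_of_real (?\<kappa> n m) = (if n = m then 1 else 0)" if n: "n < d" and m: "m < d" for n m
  proof -
    have "complex_of_real (?\<kappa> n m) = (\<Sum>\<mu>\<in>I. cinner (e n) (M \<mu> *v e m) * cnj (cinner (e n) (M \<mu> *v e m)))"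
      by (simp only: of_real_sum complex_norm_square)
    also have "\<dots> = cinner (e n) (kraus I M (?Pj m) *v e n)"
      unfolding kraus_def mv_sum cinner_sum2
      by (rule sum.cong) (simp_all add: mult_outer outer_mult_adj cinner_outer_self)
    also have "\<dots> = cinner (e n) (?Pj m *v e n)" using KP[OF m] by simp
    also have "\<dots> = (if n = m then 1 else 0)"
      using onb n m by (simp add: outer_mulv cinner_scal2)
    finally show ?thesis .
  qed
  have RHS: "(\<Sum>n<d. \<Sum>m<d. cscale (complex_of_real (?\<kappa> n m))
              (?R n m ** \<rho> ** adj (?R n m)
               - cscale (1/2) (adj (?R n m) ** ?R n m ** \<rho>)
               - cscale (1/2) (\<rho> ** adj (?R n m) ** ?R n m))) = (\<Sum>n<d. ?T n)"
  proof (rule sum.cong)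
    fix n assume "n \<in> {..<d}"
    then have n: "n < d" by simp
    have "(\<Sum>m<d. cscale (complex_of_real (?\<kappa> n m))
              (?R n m ** \<rho> ** adj (?R n m)
               - cscale (1/2) (adj (?R n m) ** ?R n m ** \<rho>)
               - cscale (1/2) (\<rho> ** adj (?R n m) ** ?R n m))) = (\<Sum>m<d. if m = n then ?T n else 0)"
    proof (rule sum.cong)
      fix m assume "m \<in> {..<d}"
      then have m: "m < d" by simp
      show "cscale (complex_of_real (?\<kappa> n m))
              (?R n m ** \<rho> ** adj (?R n m)
               - cscale (1/2) (adj (?R n m) ** ?R n m ** \<rho>)
               - cscale (1/2) (\<rho> ** adj (?R n m) ** ?R n m)) = (if m = n then ?T n else 0)"
      proof (cases "m = n")
        case True
        have a: "?Pj n ** \<rho> ** adj (?Pj n) = cscale (?r n) (?Pj n)"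
          by (simp add: adj_outer outer_mult3)
        have b: "adj (?Pj n) ** ?Pj n ** \<rho> = ?Pj n ** \<rho>" using adjPP[OF n] by simp
        have c: "\<rho> ** adj (?Pj n) ** ?Pj n = \<rho> ** ?Pj n"
          by (simp only: matrix_mul_assoc[symmetric] adjPP[OF n])
        show ?thesis using True kap[OF n n] a b c by simp
      next
        case False
        then show ?thesis using kap[OF n m] by simp
      qed
    qed simp
    also have "\<dots> = ?T n" using n by (subst sum.delta) auto
    finally show "(\<Sum>m<d. cscale (complex_of_real (?\<kappa> n m))
              (?R n m ** \<rho> ** adj (?R n m)
               - cscale (1/2) (adj (?R n m) ** ?R n m ** \<rho>)
               - cscale (1/2) (\<rho> ** adj (?R n m) ** ?R n m))) = ?T n" .
  qed simp
  show "let P = (\<lambda>n. outer (e n) (e n));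
          P0 = (\<Sum>n<d. P n);
          K0 = (\<lambda>\<rho>. P0 ** \<rho> ** P0);
          L1 = (\<lambda>\<rho>. \<Sum>n<d. P n ** \<rho> ** adj (P n)
                   - cscale (1/2) (adj (P n) ** P n ** \<rho>)
                   - cscale (1/2) (\<rho> ** adj (P n) ** P n));
          R = (\<lambda>n m. outer (e n) (e m));
          \<kappa> = (\<lambda>n m. \<Sum>\<mu>\<in>I. (cmod (cinner (e n) (M \<mu> *v e m)))\<^sup>2)
      in K0 (kraus I M (L1 (K0 \<rho>)))
         = (\<Sum>n<d. \<Sum>m<d. cscale (complex_of_real (\<kappa> n m))
              (R n m ** \<rho> ** adj (R n m)
               - cscale (1/2) (adj (R n m) ** R n m ** \<rho>)
               - cscale (1/2) (\<rho> ** adj (R n m) ** R n m)))"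
    unfolding Let_def K0\<rho> L1eq sumT LHS RHS ..
qed

end
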